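(* Let $A\in\mathbb{C}^{n\times n}$, and fix $A^-\in A\{1\}$ and $A^{GD}\in A\{GD\}$. For $X\in\mathbb{C}^{n\times n}$ the following are equivalent: (i) $X = A^{-}AA^{GD}$; (ii) $XAX=X$, $R(X)=R(A^{-}A)$, and $N(X)=N(AA^{GD})$; (iii) $XAX=X$, $XA=A^{-}A$, and $AX=AA^{GD}$.
   Context: For $A\in\mathbb{C}^{n\times n}$, $ind(A)$ is the smallest nonnegative integer $k$ with $\mathrm{rank}(A^k)=\mathrm{rank}(A^{k+1})$. $A\{1\}$ is the set of matrices $X$ with $AXA=A$. With $k=ind(A)$, $A\{GD\}$ is the set of G-Drazin inverses of $A$: matrices $X$ with $AXA=A$, $XA^{k+1}=A^k$, $A^{k+1}X=A^k$. $R(\cdot)$, $N(\cdot)$ denote range and null space. *)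

theory Defs
  imports "HOL-Analysis.Analysis"
begin

primrec matpow :: "'a::semiring_1^'n^'n \<Rightarrow> nat \<Rightarrow> 'a^'n^'n" where
  "matpow A 0 = mat 1"
| "matpow A (Suc k) = A ** matpow A k"

definition ind :: "'a::field^'n^'n \<Rightarrow> nat" where
  "ind A = (LEAST k. rank (matpow A k) = rank (matpow A (Suc k)))"

definition inner_inverses :: "'a::field^'n^'n \<Rightarrow> ('a^'n^'n) set" where
  "inner_inverses A = {X. A ** X ** A = A}"

definition gd_inverses :: "'a::field^'n^'n \<Rightarrow> ('a^'n^'n) set" where
  "gd_inverses A = {X. A ** X ** A = A
      \<and> X ** matpow A (Suc (ind A)) = matpow A (ind A)
      \<and> matpow A (Suc (ind A)) ** X = matpow A (ind A)}"

definition mat_range :: "'a::field^'n^'m \<Rightarrow> ('a^'m) set" where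
  "mat_range M = range (\<lambda>x. M *v x)"

definition mat_null :: "'a::field^'n^'m \<Rightarrow> ('a^'n) set" where
  "mat_null M = {x. M *v x = 0}"

end

theory Submission
  imports Defs
begin

theorem theorem3p7:
  fixes A Am Agd X :: "complex^'n^'n"
  assumes "Am \<in> inner_inverses A" and "Agd \<in> gd_inverses A"
  shows "(X = Am ** A ** Agd
           \<longleftrightarrow> (X ** A ** X = X \<and> mat_range X = mat_range (Am ** A)
                \<and> mat_null X = mat_null (A ** Agd)))
       \<and> (X = Am ** A ** Agd
           \<longleftrightarrow> (X ** A ** X = X \<and> X ** A = Am ** A \<and> A ** X = A ** Agd))"
proof -
  have h1: "A ** Am ** A = A" using assms(1) by (simp add: inner_inverses_def)
  have h2: "A ** Agd ** A = A" using assms(2) by (simp add: gd_inverses_def)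
  note mA = matrix_mul_assoc
  have i_iii: "X ** A ** X = X \<and> X ** A = Am ** A \<and> A ** X = A ** Agd"
    if "X = Am ** A ** Agd"
  proof -
    have a: "X ** A = Am ** A" using that h2 by (metis mA)
    have b: "A ** X = A ** Agd" using that h1 by (metis mA)
    have "X ** A ** X = X" using a that h1 by (metis mA)
    with a b show ?thesis by simp
  qed
  have iii_i: "X = Am ** A ** Agd"
    if "X ** A ** X = X" "X ** A = Am ** A" "A ** X = A ** Agd"
    using that by (metis mA)
  have i_ii: "mat_range X = mat_range (Am ** A) \<and> mat_null X = mat_null (A ** Agd)"
    if "X = Am ** A ** Agd"
  proof -
    from i_iii[OF that] have a: "X ** A = Am ** A" and b: "A ** X = A ** Agd" by auto
    have "mat_range X \<subseteq> mat_range (Am ** A)"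
      unfolding mat_range_def using that by (auto simp: matrix_vector_mul_assoc[symmetric])
    moreover have "mat_range (Am ** A) \<subseteq> mat_range X"
      unfolding mat_range_def using a by (metis image_subsetI rangeI matrix_vector_mul_assoc)
    moreover have "mat_null X \<subseteq> mat_null (A ** Agd)"
      unfolding mat_null_def using b
      by (auto simp: matrix_vector_mul_assoc[symmetric]) (metis matrix_vector_mul_assoc matrix_vector_mult_0_right)
    moreover have "mat_null (A ** Agd) \<subseteq> mat_null X"
      unfolding mat_null_def using that
      by (auto simp: mA) (metis mA matrix_vector_mul_assoc matrix_vector_mult_0_right)
    ultimately show ?thesis by blast
  qed
  have ii_i: "X = Am ** A ** Agd"
    if r: "X ** A ** X = X" and rg: "mat_range X = mat_range (Am ** A)"
      and nl: "mat_null X = mat_null (A ** Agd)"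
  proof -
    have p1: "X ** A ** (Am ** A) = Am ** A"
    proof (rule iffD2[OF matrix_eq], rule allI)
      fix v
      have "(Am ** A) *v v \<in> mat_range X" using rg unfolding mat_range_def by auto
      then obtain w where w: "(Am ** A) *v v = X *v w" unfolding mat_range_def by auto
      have "(X ** A ** (Am ** A)) *v v = (X ** A) *v (X *v w)"
        by (metis w matrix_vector_mul_assoc)
      also have "\<dots> = X *v w" using r by (simp add: matrix_vector_mul_assoc)
      finally show "(X ** A ** (Am ** A)) *v v = (Am ** A) *v v" using w by simp
    qed
    have p2: "X ** A ** (Am ** A) = X ** A" using h1 by (metis mA)
    have xa: "X ** A = Am ** A" using p1 p2 by simp
    have q: "X ** (A ** Agd) = X"
    proof (rule iffD2[OF matrix_eq], rule allI)
      fix v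
      have "(A ** Agd) *v (v - (A ** Agd) *v v) = 0"
        using h2 by (simp add: matrix_vector_mult_diff_distrib matrix_vector_mul_assoc mA)
      then have "v - (A ** Agd) *v v \<in> mat_null X" using nl unfolding mat_null_def by auto
      then have "X *v (v - (A ** Agd) *v v) = 0" unfolding mat_null_def by auto
      then show "(X ** (A ** Agd)) *v v = X *v v"
        by (simp add: matrix_vector_mult_diff_distrib matrix_vector_mul_assoc)
    qed
    show ?thesis using q xa by (metis mA)
  qed
  show ?thesis using i_iii iii_i i_ii ii_i by blast
qed

end
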